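(* Let $\mu=-1$ and $p_{0x}=p_{01}=p_{x1}=-7$, and let $\nu>0$ and $d$ be defined from these monodromy data by the formulas in the context. Let $\mathbf G=\frac{1+\sqrt5}2$ be the golden ratio. Then $$\nu=\frac{2\ln\mathbf G}{\pi}=0.3063489625\ldots,$$ $$d=\frac i2\ln\Big\{-\pi^2\frac{(\mathbf G^4+1)^2}{(\mathbf G^2+1)^2}\,2^{16i\nu}\,\frac{(1-2i\nu)^2\nu^2}{(1+2i\nu)^2}\,\frac{\Gamma(1-2i\nu)^4}{\Gamma(1-i\nu)^8}\Big\},$$ and this can also be written as the series, absolutely convergent for $|\nu|<\frac12$ (hence valid at $\nu=2\ln\mathbf G/\pi$), $$d=\frac\pi2-8\nu\ln2+2\arccos\frac1{\sqrt{1+4\nu^2}}+4\sum_{n=1}^\infty\frac{(-1)^n(1-4^n)\zeta(2n+1)}{2n+1}\nu^{2n+1}+i\frac\pi2\nu+k\pi,\qquad k\in\mathbb Z,$$ where $2\arccos\frac1{\sqrt{1+4\nu^2}}=2\sum_{n=0}^\infty(-1)^n(2\nu)^{2n+1}$ for $|\nu|<\frac12$.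
   Context: For $PVI_\mu$ (the Painlevé VI equation with parameters $\alpha=(2\mu-1)^2/2$, $\beta=\gamma=0$, $\delta=1/2$), branches near $x=0$ of the form $\frac1{y(x)}=\sum_{n\ge1}x^{n-1}\sum_{m=-n}^nA_{nm}(\nu,\mu)e^{2imd}x^{2im\nu}$ (with $\nu>0$, $d\in\mathbb C$) correspond to monodromy data $(\mu,p_{0x},p_{01},p_{x1})$ of the associated isomonodromic Fuchsian system with $p_{0x}<-2$, and the integration constants are given by $p_{0x}=-2\cosh(2\pi\nu)$, $\nu>0$, and (when $2\mu\neq 2i\nu+2m+1$, $m\in\mathbb Z$) $$d=\frac i2\ln\Big\{-\frac{4\cdot16^{2i\nu}\,\Gamma(\frac32-\mu-i\nu)^2\,\Gamma(\mu+\frac12-i\nu)^2}{(2\nu+i(1-2\mu))^2\nu^2\sinh(2\pi\nu)^2\Gamma(-i\nu)^4}\Big[\tfrac12\big(e^{2\pi\nu}p_{x1}-p_{01}\big)\sinh(2\pi\nu)+\big(\cos(2\pi\mu)+1\big)\big(e^{2\pi\nu}+1\big)\Big]\Big\},$$ $d$ being defined modulo $\pi$ (choice of branch of the logarithm). The branch associated with the quantum cohomology of $\mathbb{CP}^2$ corresponds to $\mu=-1$, $p_{0x}=p_{01}=p_{x1}=-7$. *)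

theory Defs
  imports "HOL-Analysis.Analysis"
begin

definition golden :: real where "golden = (1 + sqrt 5) / 2"

definition rzeta :: "real \<Rightarrow> real" where
  "rzeta s = (\<Sum>k. 1 / (real (Suc k)) powr s)"

text \<open>The integration constant nu > 0 determined by p0x = -2 cosh(2 pi nu) (for p0x < -2).\<close>
definition PVI_nu :: "real \<Rightarrow> real" where
  "PVI_nu p0x = (THE \<nu>. \<nu> > 0 \<and> p0x = - 2 * cosh (2 * pi * \<nu>))"

definition PVI_d_arg :: "complex \<Rightarrow> complex \<Rightarrow> complex \<Rightarrow> real \<Rightarrow> complex" where
  "PVI_d_arg \<mu> p01 px1 \<nu> =
     - (4 * 16 powr (2 * \<i> * of_real \<nu>) * Gamma (3/2 - \<mu> - \<i> * of_real \<nu>) ^ 2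
          * Gamma (\<mu> + 1/2 - \<i> * of_real \<nu>) ^ 2)
       / ((2 * of_real \<nu> + \<i> * (1 - 2 * \<mu>)) ^ 2 * of_real (\<nu> ^ 2)
          * of_real (sinh (2 * pi * \<nu>) ^ 2) * Gamma (- \<i> * of_real \<nu>) ^ 4)
     * (1/2 * (of_real (exp (2 * pi * \<nu>)) * px1 - p01) * of_real (sinh (2 * pi * \<nu>))
        + (cos (2 * of_real pi * \<mu>) + 1) * (of_real (exp (2 * pi * \<nu>)) + 1))"

definition half_i_log_values :: "complex \<Rightarrow> complex set" where
  "half_i_log_values Z = {\<i> / 2 * (Ln Z + 2 * of_real pi * \<i> * of_int k) | k :: int. True}"

definition PVI_d_values :: "complex \<Rightarrow> real \<Rightarrow> complex \<Rightarrow> complex \<Rightarrow> complex set" where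
  "PVI_d_values \<mu> p0x p01 px1 = half_i_log_values (PVI_d_arg \<mu> p01 px1 (PVI_nu p0x))"

definition d_series_term :: "real \<Rightarrow> nat \<Rightarrow> real" where
  "d_series_term \<nu> n = (-1) ^ n * (1 - 4 ^ n) * rzeta (2 * n + 1) / (2 * n + 1) * \<nu> ^ (2 * n + 1)"

end

theory Submission
  imports Defs
begin


definition nu0 :: real where "nu0 = 2 * ln golden / pi"

lemma golden_gt1: "golden > 1"
proof -
  have "sqrt 5 > 1" by (simp add: real_less_rsqrt)
  thus ?thesis by (simp add: golden_def)
qed

lemma golden_sq: "golden ^ 2 = golden + 1"
  by (simp add: golden_def power2_eq_square field_simps)

lemma nu0_pos: "nu0 > 0"
  using golden_gt1 by (simp add: nu0_def)

lemma nu0_lt: "nu0 < 1/2"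
proof -
  have "ln golden \<le> golden - 1" using golden_gt1 by (intro ln_le_minus_one) simp
  moreover have "sqrt 5 < 5/2" by (rule real_less_lsqrt) (simp_all add: power2_eq_square)
  hence "golden - 1 < 3/4" by (simp add: golden_def)
  moreover have "pi > 3" by (rule pi_gt3)
  ultimately show ?thesis by (simp add: nu0_def field_simps)
qed

definition uu :: real where "uu = golden ^ 2"

lemma uu_gt1: "uu > 1" using golden_gt1 by (simp add: uu_def)
lemma uu_sq: "uu ^ 2 = 3 * uu - 1"
  using golden_sq unfolding uu_def power2_eq_square by algebra

lemma exp_pi_vv: "exp (pi * nu0) = uu"
proof -
  have "pi * nu0 = 2 * ln golden" by (simp add: nu0_def)
  hence "exp (pi * nu0) = exp (ln golden) ^ 2" by (simp add: exp_of_nat_mult[symmetric])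
  thus ?thesis using golden_gt1 by (simp add: uu_def)
qed

lemma exp_2pi_vv: "exp (2 * pi * nu0) = uu ^ 2"
proof -
  have "exp (2 * pi * nu0) = exp (pi * nu0) ^ 2" by (subst exp_of_nat_mult[symmetric]) (simp add: mult.assoc)
  thus ?thesis using exp_pi_vv by simp
qed

lemma cosh_vv: "cosh (2 * pi * nu0) = 7/2"
proof -
  have "cosh (2*pi*nu0) = (uu^2 + inverse (uu^2)) / 2"
    by (simp add: cosh_def exp_minus exp_2pi_vv)
  also have "\<dots> = 7/2"
  proof -
    have "uu^2 \<noteq> 0" using uu_gt1 by simp
    moreover have "uu^2 * uu^2 + 1 = 7 * uu^2" using uu_sq unfolding power2_eq_square by algebra
    ultimately show ?thesis by (simp add: field_simps)
  qed
  finally show ?thesis .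
qed

lemma PVI_nu_7: "PVI_nu (-7) = nu0"
  unfolding PVI_nu_def
proof (rule the_equality)
  show "nu0 > 0 \<and> - 7 = - 2 * cosh (2 * pi * nu0)" using nu0_pos cosh_vv by simp
next
  fix y assume y: "y > 0 \<and> (- 7::real) = - 2 * cosh (2 * pi * y)"
  hence c: "cosh (2*pi*y) = cosh (2*pi*nu0)" using cosh_vv by linarith
  show "y = nu0"
  proof (rule ccontr)
    assume "y \<noteq> nu0"
    then consider "y < nu0" | "nu0 < y" by linarith
    thus False
    proof cases
      case 1 hence "cosh (2*pi*y) < cosh (2*pi*nu0)" using y by (intro cosh_real_strict_mono) auto
      thus False using c by simp
    next
      case 2 hence "cosh (2*pi*nu0) < cosh (2*pi*y)" using nu0_pos by (intro cosh_real_strict_mono) auto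
      thus False using c by simp
    qed
  qed
qed


lemma Im_not_nonpos_Int: "Im z \<noteq> 0 \<Longrightarrow> z \<notin> \<int>\<^sub>\<le>\<^sub>0"
  by (auto elim!: nonpos_Ints_cases')

lemma Gamma_half_pow4:
  fixes y :: real assumes y: "y \<noteq> 0"
  shows "Gamma (1/2 - \<i> * of_real y) ^ 4 =
     exp (8 * \<i> * of_real y * of_real (ln 2)) * of_real (pi ^ 2) *
     Gamma (1 - 2 * \<i> * of_real y) ^ 4 / Gamma (1 - \<i> * of_real y) ^ 4"
proof -
  define z where "z = 1/2 - \<i> * of_real y"
  have dup: "Gamma z * Gamma (z + 1/2) = exp ((1 - 2*z) * of_real (ln 2)) * of_real (sqrt pi) * Gamma (2*z)"
    by (rule Gamma_legendre_duplication) (use y in \<open>auto simp: z_def intro!: Im_not_nonpos_Int\<close>)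
  have e1: "z + 1/2 = 1 - \<i> * of_real y" and e2: "2 * z = 1 - 2 * \<i> * of_real y"
     and e3: "1 - 2 * z = 2 * \<i> * of_real y"
    by (simp_all add: z_def algebra_simps)
  have dup2: "Gamma z * Gamma (1 - \<i> * of_real y) = exp (2 * \<i> * of_real y * of_real (ln 2)) * of_real (sqrt pi) * Gamma (1 - 2 * \<i> * of_real y)"
    using dup unfolding e1 e2 by simp
  have nz: "Gamma (1 - \<i> * of_real y) \<noteq> 0"
    using y by (auto simp: Gamma_eq_zero_iff intro!: Im_not_nonpos_Int)
  from dup2 nz have "Gamma z = exp (2 * \<i> * of_real y * of_real (ln 2)) * of_real (sqrt pi) * Gamma (1 - 2 * \<i> * of_real y) / Gamma (1 - \<i> * of_real y)"
    by (simp add: field_simps del: mult_exp_exp)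
  hence "Gamma z ^ 4 = exp (2 * \<i> * of_real y * of_real (ln 2)) ^ 4 * of_real (sqrt pi) ^ 4 * Gamma (1 - 2 * \<i> * of_real y) ^ 4 / Gamma (1 - \<i> * of_real y) ^ 4"
    by (simp add: power_mult_distrib power_divide)
  also have "exp (2 * \<i> * of_real y * of_real (ln 2)) ^ 4 = exp (8 * \<i> * of_real y * of_real (ln 2))"
    by (subst exp_of_nat_mult[symmetric]) (simp add: mult.assoc)
  also have "(of_real (sqrt pi) :: complex) ^ 4 = of_real (pi ^ 2)"
  proof -
    have "sqrt pi ^ 4 = (sqrt pi ^ 2) ^ 2" by (simp only: power_mult[symmetric]) simp
    hence "sqrt pi ^ 4 = pi ^ 2" by simp
    thus ?thesis by (metis of_real_power)
  qed
  finally show ?thesis by (simp add: z_def)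
qed

lemma Gamma_plus2:
  assumes that: "Im z \<noteq> 0"
  shows "Gamma (z + 2) = (z + 1) * z * Gamma z"
proof -
  have "Gamma (z + 2) = Gamma ((z + 1) + 1)" by (simp add: add.assoc)
  also have "\<dots> = (z + 1) * Gamma (z + 1)" using that by (intro Gamma_plus1 Im_not_nonpos_Int) simp
  also have "\<dots> = (z+1) * z * Gamma z" using that by (simp add: Gamma_plus1 Im_not_nonpos_Int)
  finally show ?thesis .
qed

lemma Gamma_minus1: "Im z \<noteq> 0 \<Longrightarrow> Gamma (z - 1) = Gamma z / (z - 1)"
proof -
  assume h: "Im z \<noteq> 0"
  have "Gamma ((z - 1) + 1) = (z - 1) * Gamma (z - 1)" using h by (intro Gamma_plus1 Im_not_nonpos_Int) simp
  moreover have "z - 1 \<noteq> 0" using h by auto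
  ultimately show ?thesis by (simp add: field_simps)
qed


lemma key_real:
  defines "S \<equiv> (uu^2 - inverse (uu^2)) / 2"
  shows "1/2 * (uu^2 * (-7) - (-7)) * S + 2 * (uu^2 + 1) = - ((uu^2+1)^2/(uu+1)^2) * S^2"
proof -
  have u0: "uu \<noteq> 0" "uu + 1 \<noteq> 0" using uu_gt1 by auto
  have hS: "S * (2 * uu^2) = uu^4 - 1" unfolding S_def using u0 by (simp add: field_simps)
  have "(1/2 * (uu^2 * (-7) - (-7)) * S + 2 * (uu^2 + 1)) * (uu+1)^2 = - ((uu^2+1)^2) * S^2"
    using hS uu_sq by algebra
  thus ?thesis using u0 by (simp add: field_simps)
qed

lemma alg_core:
  fixes E P g1 g2 v S c w :: complex
  assumes "v \<noteq> 0" "S \<noteq> 0" "g1 \<noteq> 0"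
  shows "4 * E * E * P * c * (- 1/4 * w ^ 2) * (v ^ 4 / v ^ 2) * (g2 ^ 4 / (g1 ^ 4 * g1 ^ 4)) * (S ^ 2 / S ^ 2)
     = - (P * c) * E ^ 2 * (w ^ 2 * v ^ 2) * (g2 ^ 4 / (g1 ^ 4 * g1 ^ 4))"
  using assms by (simp add: field_simps power2_eq_square power4_eq_xxxx)

lemma alg2:
  fixes E P g1 g2 v S c :: complex
  assumes v: "v \<noteq> 0" and S: "S \<noteq> 0" and g1: "g1 \<noteq> 0"
    and d1: "1 + 2 * \<i> * v \<noteq> 0" and d2: "2 * v + 3 * \<i> \<noteq> 0" and d3: "- 1/2 - \<i> * v \<noteq> 0"
  shows "- (4 * E * (((3/2 - \<i> * v) * (1/2 - \<i> * v) / (- 1/2 - \<i> * v)) ^ 2 * (E * P * g2 ^ 4 / g1 ^ 4))) /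
      ((2 * v + 3 * \<i>) ^ 2 * v ^ 2 * S ^ 2 * (g1 / (- \<i> * v)) ^ 4) * (- c * S ^ 2)
    = - (P * c) * E ^ 2 * ((1 - 2 * \<i> * v) ^ 2 * v ^ 2 / (1 + 2 * \<i> * v) ^ 2) * (g2 ^ 4 / g1 ^ 8)"
proof -
  have "3/2 - \<i> * v = (- \<i> / 2) * (2 * v + 3 * \<i>)" by (simp add: algebra_simps)
  hence e1: "(3/2 - \<i> * v) / (2 * v + 3 * \<i>) = - \<i> / 2"
    using nonzero_mult_div_cancel_right[OF d2, of "- \<i> / 2"] by simp
  have e2: "(1/2 - \<i> * v) / (- 1/2 - \<i> * v) = - (1 - 2 * \<i> * v) / (1 + 2 * \<i> * v)"
  proof -
    have "(1/2 - \<i> * v) * (1 + 2 * \<i> * v) = - (1 - 2 * \<i> * v) * (- 1/2 - \<i> * v)"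
      by (simp add: algebra_simps)
    thus ?thesis by (subst frac_eq_eq[OF d3 d1])
  qed
  have "((3/2 - \<i> * v) * (1/2 - \<i> * v) / (- 1/2 - \<i> * v)) ^ 2 / (2 * v + 3 * \<i>) ^ 2
      = ((3/2 - \<i> * v) / (2 * v + 3 * \<i>)) ^ 2 * ((1/2 - \<i> * v) / (- 1/2 - \<i> * v)) ^ 2"
    by (simp add: power_divide power_mult_distrib)
  also have "\<dots> = - 1/4 * ((1 - 2 * \<i> * v) / (1 + 2 * \<i> * v)) ^ 2"
    unfolding e1 e2 by (simp add: power_divide power_mult_distrib power2_eq_square algebra_simps)
  finally have e3: "((3/2 - \<i> * v) * (1/2 - \<i> * v) / (- 1/2 - \<i> * v)) ^ 2 / (2 * v + 3 * \<i>) ^ 2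
      = - 1/4 * ((1 - 2 * \<i> * v) / (1 + 2 * \<i> * v)) ^ 2" .
  have e4: "(g1 / (- \<i> * v)) ^ 4 = g1 ^ 4 / v ^ 4"
    by (simp add: power_divide power_mult_distrib)
  have "- (4 * E * (((3/2 - \<i> * v) * (1/2 - \<i> * v) / (- 1/2 - \<i> * v)) ^ 2 * (E * P * g2 ^ 4 / g1 ^ 4))) /
      ((2 * v + 3 * \<i>) ^ 2 * v ^ 2 * S ^ 2 * (g1 / (- \<i> * v)) ^ 4) * (- c * S ^ 2)
     = 4 * E * E * P * c * (((3/2 - \<i> * v) * (1/2 - \<i> * v) / (- 1/2 - \<i> * v)) ^ 2 / (2 * v + 3 * \<i>) ^ 2)
        * (v ^ 4 / v ^ 2) * (g2 ^ 4 / (g1 ^ 4 * g1 ^ 4)) * (S ^ 2 / S ^ 2)"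
    unfolding e4 by (simp add: field_simps)
  also have "\<dots> = - (P * c) * E ^ 2 * ((1 - 2 * \<i> * v) ^ 2 * v ^ 2 / (1 + 2 * \<i> * v) ^ 2) * (g2 ^ 4 / g1 ^ 8)"
  proof -
    have r: "(1 - 2 * \<i> * v) ^ 2 * v ^ 2 / (1 + 2 * \<i> * v) ^ 2 = ((1 - 2 * \<i> * v) / (1 + 2 * \<i> * v)) ^ 2 * v ^ 2"
      by (simp add: power_divide)
    have g8: "g1 ^ 8 = g1 ^ 4 * g1 ^ 4" by (simp flip: power_add)
    show ?thesis unfolding e3 r g8 by (rule alg_core[OF v S g1])
  qed
  finally show ?thesis .
qed

lemma sinh_2pi_nu0: "sinh (2 * pi * nu0) = (uu^2 - inverse (uu^2)) / 2"
  by (simp add: sinh_def exp_minus exp_2pi_vv)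

lemma golden4: "golden ^ 4 = uu ^ 2" and golden2: "golden ^ 2 = uu"
  by (simp_all add: uu_def flip: power_mult)

definition Bx :: complex where
  "Bx = (let \<nu> = nu0 in
              - of_real (pi ^ 2 * (golden ^ 4 + 1) ^ 2 / (golden ^ 2 + 1) ^ 2)
              * 2 powr (16 * \<i> * of_real \<nu>)
              * ((1 - 2 * \<i> * of_real \<nu>) ^ 2 * of_real (\<nu> ^ 2) / (1 + 2 * \<i> * of_real \<nu>) ^ 2)
              * (Gamma (1 - 2 * \<i> * of_real \<nu>) ^ 4 / Gamma (1 - \<i> * of_real \<nu>) ^ 8))"

lemma part2: "PVI_d_arg (-1) (-7) (-7) nu0 = Bx"
proof -
  define v where "v = nu0"
  define E where "E = exp (8 * \<i> * of_real v * of_real (ln 2))"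
  define z where "z = 1/2 - \<i> * of_real v"
  define g1 where "g1 = Gamma (1 - \<i> * of_real v)"
  define g2 where "g2 = Gamma (1 - 2 * \<i> * of_real v)"
  define S where "S = (uu^2 - inverse (uu^2)) / 2"
  have v0: "v \<noteq> 0" using nu0_pos by (simp add: v_def)
  have a1: "(16::complex) powr (2 * \<i> * of_real v) = E"
  proof -
    have "ln (16::complex) = of_real (ln (2^4))" using Ln_of_real[of 16] by simp
    also have "\<dots> = 4 * of_real (ln 2)" by (subst ln_realpow) simp_all
    finally show ?thesis by (simp add: powr_def E_def mult_ac)
  qed
  have a2: "(2::complex) powr (16 * \<i> * of_real v) = E ^ 2"
  proof -
    have "ln (2::complex) = of_real (ln 2)" using Ln_of_real[of 2] by simp
    thus ?thesis unfolding E_def by (simp add: powr_def flip: exp_of_nat_mult) (simp add: mult_ac)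
  qed
  have a3: "Gamma (3/2 - (-1) - \<i> * of_real v) = (z + 1) * z * Gamma z"
  proof -
    have e: "3/2 - (-1) - \<i> * of_real v = z + 2" by (simp add: z_def)
    show ?thesis unfolding e by (rule Gamma_plus2) (use v0 in \<open>simp add: z_def\<close>)
  qed
  have a4: "Gamma (-1 + 1/2 - \<i> * of_real v) = Gamma z / (z - 1)"
  proof -
    have e: "-1 + 1/2 - \<i> * of_real v = z - 1" by (simp add: z_def)
    show ?thesis unfolding e by (rule Gamma_minus1) (use v0 in \<open>simp add: z_def\<close>)
  qed
  have a5: "Gamma (- \<i> * of_real v) = g1 / (- \<i> * of_real v)"
  proof -
    have "Gamma (- \<i> * of_real v + 1) = (- \<i> * of_real v) * Gamma (- \<i> * of_real v)"
      using v0 by (intro Gamma_plus1 Im_not_nonpos_Int) simp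
    moreover have "- \<i> * of_real v + 1 = 1 - \<i> * of_real v" by simp
    ultimately show ?thesis using v0 by (simp add: g1_def field_simps)
  qed
  have a6: "cos (2 * of_real pi * (-1) :: complex) = 1"
  proof -
    have "cos (2 * of_real pi * (-1) :: complex) = of_real (cos (- (2 * pi)))" by (simp flip: cos_of_real)
    thus ?thesis by simp
  qed
  have gz: "Gamma z ^ 4 = E * of_real (pi ^ 2) * g2 ^ 4 / g1 ^ 4"
    unfolding z_def E_def g1_def g2_def using Gamma_half_pow4[OF v0] by simp
  have key: "1/2 * (uu^2 * (-7) - (-7)) * S + 2 * (uu^2 + 1) = - ((uu^2+1)^2/(uu+1)^2) * S^2"
    unfolding S_def by (rule key_real)
  have g1nz: "g1 \<noteq> 0" unfolding g1_def using v0 by (auto simp: Gamma_eq_zero_iff intro!: Im_not_nonpos_Int)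
  have ev: "exp (2 * pi * v) = uu^2" unfolding v_def by (rule exp_2pi_vv)
  have sv: "sinh (2 * pi * v) = S" unfolding v_def S_def by (rule sinh_2pi_nu0)
  have Snz: "S \<noteq> 0" using sinh_2pi_nu0 nu0_pos by (simp add: S_def flip: sinh_2pi_nu0)
  have main: "- (4 * E * ((z + 1) * z * Gamma z)\<^sup>2 * (Gamma z / (z - 1))\<^sup>2) /
    ((2 * complex_of_real v + \<i> * (1 - 2 * - 1))\<^sup>2 * complex_of_real (v\<^sup>2) *
     complex_of_real (S\<^sup>2) * (g1 / (- \<i> * complex_of_real v)) ^ 4) *
    (1 / 2 * (complex_of_real (uu^2) * - 7 - - 7) * complex_of_real S + (1 + 1) * (complex_of_real (uu^2) + 1))
    = - complex_of_real (pi\<^sup>2 * (uu\<^sup>2 + 1)\<^sup>2 / (uu + 1)\<^sup>2) * E\<^sup>2 *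
    ((1 - 2 * \<i> * complex_of_real v)\<^sup>2 * complex_of_real (v\<^sup>2) /
     (1 + 2 * \<i> * complex_of_real v)\<^sup>2) *
    (g2 ^ 4 / g1 ^ 8)"
  proof -
    define c where "c = (uu^2+1)^2/(uu+1)^2"
    have zm1: "z - 1 \<noteq> 0" by (auto simp: z_def complex_eq_iff)
    have h1: "4 * E * ((z + 1) * z * Gamma z)\<^sup>2 * (Gamma z / (z - 1))\<^sup>2 = 4 * E * (((z+1)*z/(z-1))^2 * Gamma z ^ 4)"
      using zm1 by (simp add: field_simps power2_eq_square power4_eq_xxxx)
    have h2: "2 * complex_of_real v + \<i> * (1 - 2 * - 1) = 2 * of_real v + 3 * \<i>" by simp
    have h4: "(1 / 2 * (complex_of_real (uu^2) * - 7 - - 7) * complex_of_real S + (1 + 1) * (complex_of_real (uu^2) + 1))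
        = - of_real c * of_real S ^ 2"
    proof -
      have "(1 / 2 * (complex_of_real (uu^2) * - 7 - - 7) * complex_of_real S + (1 + 1) * (complex_of_real (uu^2) + 1))
        = of_real (1/2 * (uu^2 * (-7) - (-7)) * S + 2 * (uu^2 + 1))" by simp
      also have "\<dots> = - of_real c * of_real S ^ 2" unfolding key c_def by simp
      finally show ?thesis .
    qed
    have h5: "z + 1 = 3/2 - \<i> * of_real v" "z = 1/2 - \<i> * of_real v" "z - 1 = - 1/2 - \<i> * of_real v"
      by (simp_all add: z_def)
    have d1: "1 + 2 * \<i> * of_real v \<noteq> 0" and d2: "2 * of_real v + 3 * \<i> \<noteq> 0" and d3: "- 1/2 - \<i> * of_real v \<noteq> 0"
      by (auto simp: complex_eq_iff)
    have "- (4 * E * ((z + 1) * z * Gamma z)\<^sup>2 * (Gamma z / (z - 1))\<^sup>2) /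
    ((2 * complex_of_real v + \<i> * (1 - 2 * - 1))\<^sup>2 * complex_of_real (v\<^sup>2) *
     complex_of_real (S\<^sup>2) * (g1 / (- \<i> * complex_of_real v)) ^ 4) *
    (1 / 2 * (complex_of_real (uu^2) * - 7 - - 7) * complex_of_real S + (1 + 1) * (complex_of_real (uu^2) + 1))
    = - (4 * E * (((3/2 - \<i> * of_real v) * (1/2 - \<i> * of_real v) / (- 1/2 - \<i> * of_real v)) ^ 2 * (E * of_real (pi^2) * g2 ^ 4 / g1 ^ 4))) /
      ((2 * of_real v + 3 * \<i>) ^ 2 * of_real v ^ 2 * of_real S ^ 2 * (g1 / (- \<i> * of_real v)) ^ 4) * (- of_real c * of_real S ^ 2)"
      unfolding h1 h2 h4 unfolding gz unfolding h5 by simp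
    also have "\<dots> = - (of_real (pi^2) * of_real c) * E ^ 2 * ((1 - 2 * \<i> * of_real v) ^ 2 * of_real v ^ 2 / (1 + 2 * \<i> * of_real v) ^ 2) * (g2 ^ 4 / g1 ^ 8)"
      by (rule alg2) (use v0 Snz g1nz d1 d2 d3 in auto)
    also have "\<dots> = - complex_of_real (pi\<^sup>2 * (uu\<^sup>2 + 1)\<^sup>2 / (uu + 1)\<^sup>2) * E\<^sup>2 *
    ((1 - 2 * \<i> * complex_of_real v)\<^sup>2 * complex_of_real (v\<^sup>2) /
     (1 + 2 * \<i> * complex_of_real v)\<^sup>2) *
    (g2 ^ 4 / g1 ^ 8)" by (simp add: c_def)
    finally show ?thesis .
  qed
  show ?thesis
    unfolding PVI_d_arg_def Bx_def Let_def
    apply (fold v_def)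
    apply (simp only: a1 a2 a3 a4 a5 a6 ev sv golden4 golden2 flip: g1_def g2_def)
    by (rule main)
qed


lemma inv_sq_summable: "summable (\<lambda>k. 1 / real (Suc k) ^ 2)"
  using inverse_squares_sums by (simp add: sums_iff add.commute)

lemma rz_summable:
  assumes s: "s \<ge> 2"
  shows "summable (\<lambda>k. 1 / real (Suc k) powr s)"
proof (rule summable_comparison_test[OF _ inv_sq_summable])
  show "\<exists>N. \<forall>n\<ge>N. norm (1 / real (Suc n) powr s) \<le> 1 / real (Suc n) ^ 2"
  proof (intro exI allI impI)
    fix n :: nat
    have "real (Suc n) ^ 2 = real (Suc n) powr 2" by (simp add: powr_realpow)
    also have "\<dots> \<le> real (Suc n) powr s" using s by (intro powr_mono) auto
    finally have "real (Suc n) ^ 2 \<le> real (Suc n) powr s" .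
    thus "norm (1 / real (Suc n) powr s) \<le> 1 / real (Suc n) ^ 2"
      by (simp add: frac_le)
  qed
qed

lemma rz_sums: "s \<ge> 2 \<Longrightarrow> (\<lambda>k. 1 / real (Suc k) powr s) sums rzeta s"
  unfolding rzeta_def by (rule summable_sums[OF rz_summable])

lemma rz_sums_nat:
  assumes m: "m \<ge> 2"
  shows "(\<lambda>k. 1 / real (Suc k) ^ m) sums rzeta (real m)"
proof -
  have "(\<lambda>k. 1 / real (Suc k) powr real m) sums rzeta (real m)" using m by (intro rz_sums) simp
  moreover have "real (Suc k) powr real m = real (Suc k) ^ m" for k by (simp add: powr_realpow)
  ultimately show ?thesis by simp
qed

lemma rz_bound:
  assumes s: "s \<ge> 2"
  shows "0 \<le> rzeta s" "rzeta s \<le> 3"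
proof -
  have "rzeta s = (\<Sum>k. 1 / real (Suc k) powr s)" by (simp add: rzeta_def)
  also have "\<dots> \<le> (\<Sum>k. 1 / real (Suc k) ^ 2)"
  proof (rule suminf_le[OF _ rz_summable[OF s] inv_sq_summable])
    fix n :: nat
    have "real (Suc n) ^ 2 = real (Suc n) powr 2" by (simp add: powr_realpow)
    also have "\<dots> \<le> real (Suc n) powr s" using s by (intro powr_mono) auto
    finally have "real (Suc n) ^ 2 \<le> real (Suc n) powr s" .
    thus "1 / real (Suc n) powr s \<le> 1 / real (Suc n) ^ 2" by (simp add: frac_le)
  qed
  also have "\<dots> = pi^2/6" using inverse_squares_sums by (simp add: sums_iff add.commute)
  also have "\<dots> \<le> 3"
  proof -
    have "pi^2 \<le> 4^2" using pi_less_4 pi_gt_zero by (intro power_mono) auto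
    thus ?thesis by simp
  qed
  finally show "rzeta s \<le> 3" .
  show "0 \<le> rzeta s" unfolding rzeta_def by (intro suminf_nonneg rz_summable s) simp
qed

lemma abs_aux: "R \<ge> 0 \<Longrightarrow> D > 0 \<Longrightarrow> \<bar>(-1)^m * a * R / D * x\<bar> = \<bar>a\<bar> * R / D * \<bar>x\<bar>"
  for R D a x :: real by (simp add: abs_mult abs_divide)

lemma dterm_bound:
  "\<bar>d_series_term \<nu> (Suc n)\<bar> \<le> 3 * \<bar>\<nu>\<bar> * (4 * \<nu>^2) ^ Suc n"
proof -
  let ?m = "Suc n"
  have z: "0 \<le> rzeta (real (2 * ?m + 1))" "rzeta (real (2 * ?m + 1)) \<le> 3" by (intro rz_bound; simp)+
  have "(1::real) \<le> 4 ^ ?m" by (rule one_le_power) simp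
  hence q: "\<bar>1 - 4 ^ ?m\<bar> \<le> (4::real) ^ ?m" by simp
  have "\<bar>d_series_term \<nu> ?m\<bar> = \<bar>1 - 4 ^ ?m\<bar> * rzeta (real (2 * ?m + 1)) / real (2 * ?m + 1) * \<bar>\<nu>\<bar> ^ (2 * ?m + 1)"
    unfolding d_series_term_def by (subst abs_aux, use z in simp, simp, simp only: power_abs)
  also have "\<dots> \<le> 4 ^ ?m * 3 / 1 * \<bar>\<nu>\<bar> ^ (2 * ?m + 1)"
    by (intro mult_right_mono divide_mono mult_mono q z) (use z[simplified] in auto)
  also have "\<dots> = 3 * \<bar>\<nu>\<bar> * (4 * \<nu>^2) ^ ?m"
  proof -
    have "\<bar>\<nu>\<bar>^(2*?m+1) = (\<bar>\<nu>\<bar>^2)^?m * \<bar>\<nu>\<bar>" by (simp only: power_add power_mult power_one_right)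
    also have "\<dots> = (\<nu>^2)^?m * \<bar>\<nu>\<bar>" by (simp only: power2_abs)
    finally have e: "\<bar>\<nu>\<bar>^(2*?m+1) = (\<nu>^2)^?m * \<bar>\<nu>\<bar>" .
    show ?thesis unfolding e by (simp only: power_mult_distrib) simp
  qed
  finally show ?thesis .
qed

lemma part3: "\<forall>\<nu>::real. \<bar>\<nu>\<bar> < 1/2 \<longrightarrow> summable (\<lambda>n. \<bar>d_series_term \<nu> (Suc n)\<bar>)"
proof (intro allI impI)
  fix \<nu> :: real assume h: "\<bar>\<nu>\<bar> < 1/2"
  have "4 * \<nu>^2 < 1"
  proof -
    have "\<nu>^2 = \<bar>\<nu>\<bar>^2" by simp
    also have "\<dots> < (1/2)^2" using h by (intro power_strict_mono) auto
    finally show ?thesis by (simp add: power2_eq_square)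
  qed
  hence "summable (\<lambda>n. (4 * \<nu>^2) ^ n)" by (intro summable_geometric) simp
  hence sg: "summable (\<lambda>n. 3 * \<bar>\<nu>\<bar> * (4 * \<nu>^2) ^ Suc n)"
    by (intro summable_mult) (simp add: summable_Suc_iff)
  show "summable (\<lambda>n. \<bar>d_series_term \<nu> (Suc n)\<bar>)"
    by (rule summable_comparison_test[OF _ sg], intro exI[of _ 0] allI impI, simp only: real_norm_def abs_abs, rule dterm_bound)
qed


definition dd :: "nat \<Rightarrow> real \<Rightarrow> real" where
  "dd m x = (-1)^m * (1 - 4^m) / real (2*m+1) * x^(2*m+1)"

definition phi :: "real \<Rightarrow> real" where
  "phi x = 4 * arctan (2*x) - 8 * arctan x"

definition FF :: "real \<Rightarrow> nat \<times> nat \<Rightarrow> real" where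
  "FF y p = -8 * dd (Suc (fst p)) (y / real (Suc (snd p)))"

lemma arctan_sums: "\<bar>x\<bar> \<le> 1 \<Longrightarrow> (\<lambda>k. (-1)^k * (1 / real (k*2+1) * x ^ (k*2+1))) sums arctan x"
  using summable_arctan_series[of x] arctan_series[of x] by (simp add: sums_iff)

lemma col_sums:
  assumes x: "\<bar>x\<bar> \<le> 1/2"
  shows "(\<lambda>n. -8 * dd (Suc n) x) sums phi x"
proof -
  let ?a = "\<lambda>t k. (-1)^k * (1 / real (k*2+1) * t ^ (k*2+1))"
  have s1: "?a (2*x) sums arctan (2*x)" using x by (intro arctan_sums) auto
  have s2: "?a x sums arctan x" using x by (intro arctan_sums) auto
  have s: "(\<lambda>k. 4 * ?a (2*x) k - 8 * ?a x k) sums phi x"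
    unfolding phi_def by (intro sums_diff sums_mult s1 s2)
  have e: "4 * ?a (2*x) (Suc n) - 8 * ?a x (Suc n) = -8 * dd (Suc n) x" for n
  proof -
    define m where "m = Suc n"
    have p: "(2::real) ^ (m * 2) = 4 ^ m" by (induct m) auto
    have q: "(2*x) ^ (m * 2 + 1) = 2 * 4 ^ m * x ^ (m * 2 + 1)"
      by (simp only: power_mult_distrib power_add p) simp
    have r: "real (2 * m + 1) = real (m * 2 + 1)" by simp
    have aux: "(s::real) * (1/D * (2*Q*X)) * 4 - s * (1/D * X) * 8 = -8 * (s * (1 - Q) / D * X)" for s D Q X
      by (cases "D = 0") (simp_all add: field_simps)
    show ?thesis unfolding m_def[symmetric] dd_def q r
      using aux[of "(-1)^m" "real (m * 2 + 1)" "4^m" "x ^ (m * 2 + 1)"] by (simp add: mult_ac)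
  qed
  have "(\<lambda>n. 4 * ?a (2*x) (Suc n) - 8 * ?a x (Suc n)) sums phi x"
    using s by (subst sums_Suc_iff) simp
  thus ?thesis unfolding e .
qed

lemma dd_div: "c > 0 \<Longrightarrow> dd m (y / c) = dd m y * (1 / c ^ (2*m+1))"
  by (simp add: dd_def power_divide)

lemma FF_eq: "FF y (n, k) = (-8 * dd (Suc n) y) * (1 / real (Suc k) ^ (2 * Suc n + 1))"
  unfolding FF_def by (simp add: dd_div del: of_nat_Suc)

lemma dd_bound: "\<bar>dd m y\<bar> \<le> \<bar>y\<bar> * (4 * y^2) ^ m"
proof -
  have "(1::real) \<le> 4 ^ m" by (rule one_le_power) simp
  hence q: "\<bar>1 - 4 ^ m\<bar> \<le> (4::real) ^ m" by simp
  have "\<bar>dd m y\<bar> = \<bar>1 - 4 ^ m\<bar> / real (2*m+1) * \<bar>y\<bar> ^ (2*m+1)"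
    by (simp add: dd_def abs_mult abs_divide power_abs)
  also have "\<dots> \<le> 4 ^ m / 1 * \<bar>y\<bar> ^ (2*m+1)"
    by (intro mult_right_mono divide_mono q) auto
  also have "\<dots> = \<bar>y\<bar> * (4 * y^2) ^ m"
  proof -
    have "\<bar>y\<bar>^(2*m+1) = (\<bar>y\<bar>^2)^m * \<bar>y\<bar>" by (simp only: power_add power_mult power_one_right)
    also have "\<dots> = (y^2)^m * \<bar>y\<bar>" by (simp only: power2_abs)
    finally have e: "\<bar>y\<bar>^(2*m+1) = (y^2)^m * \<bar>y\<bar>" .
    show ?thesis unfolding e by (simp only: power_mult_distrib) simp
  qed
  finally show ?thesis .
qed

lemma dd_rz: "-8 * dd m y * rzeta (real (2*m+1)) = -8 * d_series_term y m"
  by (simp add: dd_def d_series_term_def)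

lemma row_sums: "(\<lambda>k. FF y (n, k)) sums (-8 * d_series_term y (Suc n))"
proof -
  have "(\<lambda>k. 1 / real (Suc k) ^ (2 * Suc n + 1)) sums rzeta (real (2 * Suc n + 1))"
    by (rule rz_sums_nat) simp
  from sums_mult[OF this, of "-8 * dd (Suc n) y"] show ?thesis
    unfolding FF_eq dd_rz .
qed

lemma row_abs_sums: "(\<lambda>k. norm (FF y (n, k))) sums (8 * \<bar>dd (Suc n) y\<bar> * rzeta (real (2 * Suc n + 1)))"
proof -
  have "(\<lambda>k. 1 / real (Suc k) ^ (2 * Suc n + 1)) sums rzeta (real (2 * Suc n + 1))"
    by (rule rz_sums_nat) simp
  from sums_mult[OF this, of "8 * \<bar>dd (Suc n) y\<bar>"] show ?thesis
    unfolding FF_eq by (simp add: abs_mult mult.assoc)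
qed

lemma geo_summable: "\<bar>y\<bar> < 1/2 \<Longrightarrow> summable (\<lambda>n. C * \<bar>y\<bar> * (4 * y^2) ^ Suc n)" for y C :: real
proof -
  assume h: "\<bar>y\<bar> < 1/2"
  have "y^2 = \<bar>y\<bar>^2" by simp
  also have "\<dots> < (1/2)^2" using h by (intro power_strict_mono) auto
  finally have "4 * y^2 < 1" by (simp add: power2_eq_square)
  hence "summable (\<lambda>n. (4 * y^2) ^ n)" by (intro summable_geometric) simp
  thus ?thesis by (intro summable_mult) (simp add: summable_Suc_iff)
qed

lemma double_sum:
  assumes y: "\<bar>y\<bar> < 1/2"
  shows "(\<lambda>k. phi (y / real (Suc k))) sums (-8 * (\<Sum>n. d_series_term y (Suc n)))"
proof -
  define g where "g n = 8 * \<bar>dd (Suc n) y\<bar> * rzeta (real (2 * Suc n + 1))" for n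
  have gsum: "summable g"
  proof (rule summable_comparison_test[OF _ geo_summable[OF y, of 24]], intro exI[of _ 0] allI impI)
    fix n :: nat
    have z: "0 \<le> rzeta (real (2 * Suc n + 1))" "rzeta (real (2 * Suc n + 1)) \<le> 3" by (intro rz_bound; simp)+
    have "norm (g n) = 8 * \<bar>dd (Suc n) y\<bar> * rzeta (real (2 * Suc n + 1))" using z by (simp add: g_def)
    also have "\<dots> \<le> 8 * (\<bar>y\<bar> * (4 * y^2) ^ Suc n) * 3"
      by (intro mult_mono mult_left_mono dd_bound z) auto
    finally show "norm (g n) \<le> 24 * \<bar>y\<bar> * (4 * y^2) ^ Suc n" by simp
  qed
  have "(\<lambda>p. norm (FF y p)) summable_on (UNIV \<times> UNIV)"
  proof (rule summable_on_SigmaI[where g = g])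
    show "((\<lambda>k. norm (FF y (n, k))) has_sum g n) UNIV" if "n \<in> UNIV" for n
      unfolding g_def by (rule sums_nonneg_imp_has_sum[OF row_abs_sums]) simp
    show "g summable_on UNIV"
      using gsum by (subst summable_on_UNIV_nonneg_real_iff) (auto simp: g_def intro!: mult_nonneg_nonneg rz_bound(1))
  qed auto
  hence "FF y summable_on (UNIV \<times> UNIV)" by (rule abs_summable_summable)
  then obtain T where T: "(FF y has_sum T) (UNIV \<times> UNIV)" using summable_on_def by blast
  have rows: "((\<lambda>k. FF y (n, k)) has_sum (-8 * d_series_term y (Suc n))) UNIV" for n
    by (rule norm_summable_imp_has_sum[OF _ row_sums]) (use row_abs_sums in \<open>simp add: sums_iff\<close>)
  have "((\<lambda>n. -8 * d_series_term y (Suc n)) has_sum T) UNIV"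
    by (rule has_sum_Sigma'[OF T]) (rule rows)
  hence sT: "(\<lambda>n. -8 * d_series_term y (Suc n)) sums T" by (rule has_sum_imp_sums)
  have dsum: "summable (\<lambda>n. d_series_term y (Suc n))"
    using part3 y by (auto intro: summable_rabs_cancel)
  have T8: "T = -8 * (\<Sum>n. d_series_term y (Suc n))"
    using sums_unique2[OF sT sums_mult[OF summable_sums[OF dsum], of "-8"]] .
  have T': "((\<lambda>(k, n). FF y (n, k)) has_sum T) (UNIV \<times> UNIV)"
    using T by (subst (asm) has_sum_swap) simp
  have cols: "((\<lambda>n. FF y (n, k)) has_sum phi (y / real (Suc k))) UNIV" for k
  proof (rule norm_summable_imp_has_sum)
    have xk: "\<bar>y / real (Suc k)\<bar> \<le> 1/2"
    proof -
      have "\<bar>y / real (Suc k)\<bar> = \<bar>y\<bar> / real (Suc k)" by simp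
      also have "\<dots> \<le> \<bar>y\<bar> / 1" by (intro divide_left_mono) auto
      finally show ?thesis using y by simp
    qed
    show "(\<lambda>n. FF y (n, k)) sums phi (y / real (Suc k))"
      unfolding FF_def fst_conv snd_conv by (rule col_sums[OF xk])
    show "summable (\<lambda>n. norm (FF y (n, k)))"
    proof (rule summable_comparison_test[OF _ geo_summable[OF y, of 8]], intro exI[of _ 0] allI impI)
      fix n :: nat
      have p: "1 \<le> real (Suc k) ^ (2 * Suc n + 1)" by (rule one_le_power) simp
      hence p': "1 / real (Suc k) ^ (2 * Suc n + 1) \<le> 1" by simp
      have "norm (FF y (n, k)) = 8 * \<bar>dd (Suc n) y\<bar> * (1 / real (Suc k) ^ (2 * Suc n + 1))"
        unfolding FF_eq by (simp add: abs_mult)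
      also have "\<dots> \<le> 8 * (\<bar>y\<bar> * (4 * y^2) ^ Suc n) * 1"
        by (intro mult_mono mult_left_mono dd_bound p') auto
      finally show "norm (norm (FF y (n, k))) \<le> 8 * \<bar>y\<bar> * (4 * y^2) ^ Suc n" by simp
    qed
  qed
  have "((\<lambda>k. phi (y / real (Suc k))) has_sum T) UNIV"
    by (rule has_sum_Sigma'[OF T']) (use cols in \<open>simp del: of_nat_Suc\<close>)
  hence "(\<lambda>k. phi (y / real (Suc k))) sums T" by (rule has_sum_imp_sums)
  thus ?thesis unfolding T8 .
qed


definition fk :: "real \<Rightarrow> nat \<Rightarrow> complex" where
  "fk y k = (1 - \<i> * of_real (y / real k)) ^ 8 / (1 - \<i> * of_real (2 * y / real k)) ^ 4"

lemma exp_pow_eq: "4 * a = 8 * b \<Longrightarrow> exp a ^ 4 = exp (b::complex) ^ 8"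
  by (simp flip: exp_of_nat_mult)

lemma frac_pow_aux: "(a / b) ^ 4 / (c / d) ^ 8 = (a ^ 4 / c ^ 8) * (d ^ 8 / b ^ 4)" for a b c d :: complex
  by (simp add: divide_inverse inverse_mult_distrib power_mult_distrib power_inverse mult_ac)

lemma prod_pow_aux: "(a * b) ^ 4 / (c * d) ^ 8 = (a ^ 4 / c ^ 8) * (b ^ 4 / d ^ 8)" for a b c d :: complex
  by (simp add: divide_inverse inverse_mult_distrib power_mult_distrib mult_ac)

lemma W_ratio:
  fixes y :: real
  assumes y: "y \<noteq> 0"
  shows "Gamma_series_Weierstrass (- 2 * \<i> * of_real y) n ^ 4 / Gamma_series_Weierstrass (- \<i> * of_real y) n ^ 8
       = of_real (y ^ 4 / 16) * (\<Prod>k=1..n. fk y k)"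
proof -
  define z1 where "z1 = - \<i> * complex_of_real y"
  define z2 where "z2 = - 2 * \<i> * complex_of_real y"
  define e where "e z k = exp (z / of_nat k) / (1 + z / of_nat k)" for z :: complex and k :: nat
  have t: "e z2 k ^ 4 / e z1 k ^ 8 = fk y k" if "k \<ge> 1" for k
  proof -
    have x: "exp (z2 / of_nat k) ^ 4 = exp (z1 / of_nat k) ^ 8"
      by (rule exp_pow_eq) (simp add: z1_def z2_def)
    have nz: "exp (z1 / of_nat k) ^ 8 \<noteq> 0" by simp
    have a: "1 + z1 / of_nat k = 1 - \<i> * of_real (y / real k)" by (simp add: z1_def)
    have b: "1 + z2 / of_nat k = 1 - \<i> * of_real (2 * y / real k)" by (simp add: z2_def)
    have "e z2 k ^ 4 / e z1 k ^ 8 = (exp (z2 / of_nat k) ^ 4 / exp (z1 / of_nat k) ^ 8) * ((1 + z1 / of_nat k) ^ 8 / (1 + z2 / of_nat k) ^ 4)"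
      unfolding e_def by (rule frac_pow_aux)
    also have "\<dots> = fk y k" unfolding x a b fk_def using nz by simp
    finally show ?thesis .
  qed
  have pre: "(exp (- euler_mascheroni * z2) / z2) ^ 4 / (exp (- euler_mascheroni * z1) / z1) ^ 8 = of_real (y ^ 4 / 16)"
  proof -
    have x: "exp (- euler_mascheroni * z2) ^ 4 = exp (- euler_mascheroni * z1) ^ 8"
      by (rule exp_pow_eq) (simp add: z1_def z2_def)
    have nz: "exp (- euler_mascheroni * z1) ^ 8 \<noteq> 0" by simp
    have "(exp (- euler_mascheroni * z2) / z2) ^ 4 / (exp (- euler_mascheroni * z1) / z1) ^ 8
       = (exp (- euler_mascheroni * z2) ^ 4 / exp (- euler_mascheroni * z1) ^ 8) * (z1 ^ 8 / z2 ^ 4)"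
      by (rule frac_pow_aux)
    also have "\<dots> = z1 ^ 8 / z2 ^ 4" unfolding x using nz by simp
    also have "z1 ^ 8 = of_real (y ^ 8)" by (simp add: z1_def power_mult_distrib)
    also have "z2 ^ 4 = of_real (16 * y ^ 4)" by (simp add: z2_def power_mult_distrib)
    also have "of_real (y ^ 8) / of_real (16 * y ^ 4) = (of_real (y ^ 4 / 16) :: complex)"
      using y by (simp add: field_simps flip: power_add)
    finally show ?thesis .
  qed
  have "Gamma_series_Weierstrass z2 n ^ 4 / Gamma_series_Weierstrass z1 n ^ 8
     = ((exp (- euler_mascheroni * z2) / z2) ^ 4 / (exp (- euler_mascheroni * z1) / z1) ^ 8)
       * (\<Prod>k=1..n. e z2 k ^ 4 / e z1 k ^ 8)"
    unfolding Gamma_series_Weierstrass_def e_def[symmetric] prod_pow_aux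
    by (simp only: prod_power_distrib prod_dividef)
  also have "(\<Prod>k=1..n. e z2 k ^ 4 / e z1 k ^ 8) = (\<Prod>k=1..n. fk y k)"
    by (intro prod.cong refl t) simp
  finally have r: "Gamma_series_Weierstrass z2 n ^ 4 / Gamma_series_Weierstrass z1 n ^ 8
     = ((exp (- euler_mascheroni * z2) / z2) ^ 4 / (exp (- euler_mascheroni * z1) / z1) ^ 8) * (\<Prod>k=1..n. fk y k)" .
  show ?thesis unfolding z1_def[symmetric] z2_def[symmetric] using r[unfolded pre] .
qed

lemma prod_lim:
  fixes y :: real
  assumes y: "y \<noteq> 0"
  shows "(\<lambda>n. \<Prod>k<n. fk y (Suc k)) \<longlonglongrightarrow> Gamma (1 - 2 * \<i> * of_real y) ^ 4 / Gamma (1 - \<i> * of_real y) ^ 8"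
proof -
  define z1 where "z1 = - \<i> * complex_of_real y"
  define z2 where "z2 = - 2 * \<i> * complex_of_real y"
  have nz1: "z1 \<notin> \<int>\<^sub>\<le>\<^sub>0" "z2 \<notin> \<int>\<^sub>\<le>\<^sub>0" using y by (auto simp: z1_def z2_def intro!: Im_not_nonpos_Int)
  have G1: "Gamma z1 ^ 8 \<noteq> 0" using nz1 by (simp add: Gamma_eq_zero_iff)
  have L: "(\<lambda>n. Gamma_series_Weierstrass z2 n ^ 4 / Gamma_series_Weierstrass z1 n ^ 8) \<longlonglongrightarrow> Gamma z2 ^ 4 / Gamma z1 ^ 8"
    by (intro tendsto_divide tendsto_power Gamma_Weierstrass_complex G1)
  have "(\<lambda>n. of_real (16 / y ^ 4) * (Gamma_series_Weierstrass z2 n ^ 4 / Gamma_series_Weierstrass z1 n ^ 8))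
         \<longlonglongrightarrow> of_real (16 / y ^ 4) * (Gamma z2 ^ 4 / Gamma z1 ^ 8)"
    by (intro tendsto_mult_left L)
  moreover have "of_real (16 / y ^ 4) * (Gamma_series_Weierstrass z2 n ^ 4 / Gamma_series_Weierstrass z1 n ^ 8)
      = (\<Prod>k<n. fk y (Suc k))" for n
  proof -
    have "of_real (16 / y ^ 4) * (Gamma_series_Weierstrass z2 n ^ 4 / Gamma_series_Weierstrass z1 n ^ 8)
       = of_real (16 / y ^ 4) * (of_real (y ^ 4 / 16) * (\<Prod>k=1..n. fk y k))"
      unfolding z1_def z2_def W_ratio[OF y] ..
    also have "\<dots> = (\<Prod>k=1..n. fk y k)" using y by (simp flip: mult.assoc of_real_mult)
    also have "\<dots> = (\<Prod>k<n. fk y (Suc k))" using prod.atLeast1_atMost_eq[of "fk y" n] by simp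
    finally show ?thesis .
  qed
  moreover have "of_real (16 / y ^ 4) * (Gamma z2 ^ 4 / Gamma z1 ^ 8) = Gamma (1 - 2 * \<i> * of_real y) ^ 4 / Gamma (1 - \<i> * of_real y) ^ 8"
  proof -
    have a: "Gamma (1 - 2 * \<i> * of_real y) = z2 * Gamma z2"
      using Gamma_plus1[OF nz1(2)] by (simp add: z2_def add.commute)
    have b: "Gamma (1 - \<i> * of_real y) = z1 * Gamma z1"
      using Gamma_plus1[OF nz1(1)] by (simp add: z1_def add.commute)
    have c: "z2 ^ 4 = of_real (16 * y ^ 4)" "z1 ^ 8 = of_real (y ^ 8)" by (simp_all add: z1_def z2_def power_mult_distrib)
    show ?thesis unfolding a b power_mult_distrib c using y G1
      by (simp add: field_simps flip: power_add)
  qed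
  ultimately show ?thesis by simp
qed

lemma one_minus_i_polar: "1 - \<i> * of_real x = of_real (sqrt (1 + x^2)) * cis (- arctan x)"
proof -
  have s: "sqrt (1 + x^2) > 0" by (intro real_sqrt_gt_zero add_pos_nonneg) auto
  show ?thesis using s by (simp add: complex_eq_iff cos_arctan sin_arctan)
qed

lemma fk_polar:
  "fk y k = of_real ((1 + (y / real k)^2) ^ 4 / (1 + (2 * y / real k)^2) ^ 2) * cis (phi (y / real k))"
proof -
  define x where "x = y / real k"
  have e2: "2 * y / real k = 2 * x" by (simp add: x_def)
  have p8: "(1 - \<i> * of_real x) ^ 8 = of_real ((1 + x^2) ^ 4) * cis (- 8 * arctan x)"
  proof -
    have "(1 - \<i> * of_real x) ^ 8 = of_real (sqrt (1 + x^2) ^ 8) * cis (- arctan x) ^ 8"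
      by (simp add: one_minus_i_polar power_mult_distrib)
    also have "sqrt (1 + x^2) ^ 8 = (sqrt (1 + x^2) ^ 2) ^ 4" by (simp only: power_mult[symmetric]) simp
    also have "\<dots> = (1 + x^2) ^ 4" by simp
    also have "cis (- arctan x) ^ 8 = cis (- 8 * arctan x)" by (subst Complex.DeMoivre) simp
    finally show ?thesis .
  qed
  have p4: "(1 - \<i> * of_real (2 * x)) ^ 4 = of_real ((1 + (2 * x)^2) ^ 2) * cis (- 4 * arctan (2 * x))"
  proof -
    have "(1 - \<i> * of_real (2 * x)) ^ 4 = of_real (sqrt (1 + (2 * x)^2) ^ 4) * cis (- arctan (2 * x)) ^ 4"
      by (simp only: one_minus_i_polar power_mult_distrib of_real_power)
    also have "sqrt (1 + (2 * x)^2) ^ 4 = (sqrt (1 + (2 * x)^2) ^ 2) ^ 2" by (simp only: power_mult[symmetric]) simp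
    also have "\<dots> = (1 + (2 * x)^2) ^ 2" by (simp del: power_mult_distrib)
    also have "cis (- arctan (2 * x)) ^ 4 = cis (- 4 * arctan (2 * x))" by (subst Complex.DeMoivre) simp
    finally show ?thesis .
  qed
  have "fk y k = (of_real ((1 + x^2) ^ 4) * cis (- 8 * arctan x)) / (of_real ((1 + (2 * x)^2) ^ 2) * cis (- 4 * arctan (2 * x)))"
    unfolding fk_def e2 x_def[symmetric] p8 p4 ..
  also have "\<dots> = of_real ((1 + x^2) ^ 4 / (1 + (2 * x)^2) ^ 2) * (cis (- 8 * arctan x) / cis (- 4 * arctan (2 * x)))"
    by (simp add: divide_inverse inverse_mult_distrib mult_ac)
  also have "cis (- 8 * arctan x) / cis (- 4 * arctan (2 * x)) = cis (phi x)"
    by (simp add: cis_divide phi_def)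
  finally show ?thesis by (simp add: x_def)
qed


lemma prod_polar: "(\<Prod>k<n. of_real (a k) * cis (b k)) = of_real (\<Prod>k<n. a k) * cis (\<Sum>k<n. b k)"
  for n :: nat and a b :: "nat \<Rightarrow> real"
  by (induction n) (simp_all add: cis_mult[symmetric] mult_ac)

lemma Bp_polar:
  fixes y :: real
  assumes y0: "y \<noteq> 0" and y: "\<bar>y\<bar> < 1/2"
  defines "Bp \<equiv> Gamma (1 - 2 * \<i> * of_real y) ^ 4 / Gamma (1 - \<i> * of_real y) ^ 8"
  shows "Bp = of_real (cmod Bp) * cis (-8 * (\<Sum>n. d_series_term y (Suc n)))"
proof -
  define \<theta> where "\<theta> = -8 * (\<Sum>n. d_series_term y (Suc n))"
  define r where "r k = (1 + (y / real k)^2) ^ 4 / (1 + (2 * y / real k)^2) ^ 2" for k :: nat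
  define P where "P n = (\<Prod>k<n. fk y (Suc k))" for n
  define s where "s n = (\<Sum>k<n. phi (y / real (Suc k)))" for n
  have rpos: "r k \<ge> 0" for k unfolding r_def by simp
  have P: "P n = of_real (\<Prod>k<n. r (Suc k)) * cis (s n)" for n
    unfolding P_def s_def fk_polar r_def[symmetric] by (rule prod_polar)
  have PL: "P \<longlonglongrightarrow> Bp" unfolding P_def Bp_def by (rule prod_lim[OF y0])
  have sL: "s \<longlonglongrightarrow> \<theta>" using double_sum[OF y] unfolding sums_def s_def \<theta>_def .
  have QL: "(\<lambda>n. P n * cis (- s n)) \<longlonglongrightarrow> Bp * cis (- \<theta>)"
    by (intro tendsto_mult PL tendsto_cis tendsto_minus sL)
  have Q: "P n * cis (- s n) = of_real (\<Prod>k<n. r (Suc k))" for n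
    unfolding P by (simp add: mult.assoc cis_mult)
  define L where "L = Bp * cis (- \<theta>)"
  have QL': "(\<lambda>n. complex_of_real (\<Prod>k<n. r (Suc k))) \<longlonglongrightarrow> L"
    using QL unfolding Q L_def .
  have "(\<lambda>n. Im (complex_of_real (\<Prod>k<n. r (Suc k)))) \<longlonglongrightarrow> Im L" by (intro tendsto_Im QL')
  hence "(\<lambda>n. 0) \<longlonglongrightarrow> Im L" by (simp only: Im_complex_of_real)
  hence ImL: "Im L = 0" by (simp add: LIMSEQ_const_iff)
  have "(\<lambda>n. Re (complex_of_real (\<Prod>k<n. r (Suc k)))) \<longlonglongrightarrow> Re L" by (intro tendsto_Re QL')
  hence "(\<lambda>n. \<Prod>k<n. r (Suc k)) \<longlonglongrightarrow> Re L" by (simp only: Re_complex_of_real)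
  hence ReL: "Re L \<ge> 0"
    by (rule LIMSEQ_le_const) (auto intro!: prod_nonneg rpos)
  have L_eq: "L = of_real (Re L)" using ImL by (simp add: complex_eq_iff)
  have "cmod L = cmod Bp" by (simp add: L_def norm_mult)
  moreover have "cmod L = Re L" using ReL by (subst L_eq) simp
  ultimately have "L = of_real (cmod Bp)" using L_eq by simp
  hence "Bp * cis (- \<theta>) * cis \<theta> = of_real (cmod Bp) * cis \<theta>" unfolding L_def by simp
  thus ?thesis unfolding \<theta>_def[symmetric] by (simp add: mult.assoc cis_mult)
qed

lemma Gamma_norm_sq:
  fixes y :: real
  assumes y: "y > 0"
  shows "cmod (Gamma (1 - \<i> * of_real y)) ^ 2 = pi * y / sinh (pi * y)"
proof -
  define g where "g = Gamma (1 - \<i> * of_real y)"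
  have nz: "\<i> * of_real y \<notin> \<int>\<^sub>\<le>\<^sub>0" using y by (intro Im_not_nonpos_Int) simp
  have c: "cnj g = Gamma (1 + \<i> * of_real y)" unfolding g_def by (simp add: cnj_Gamma)
  also have "\<dots> = \<i> * of_real y * Gamma (\<i> * of_real y)"
    using Gamma_plus1[OF nz] by (simp add: add.commute)
  finally have c: "cnj g = \<i> * of_real y * Gamma (\<i> * of_real y)" .
  have refl: "Gamma (\<i> * of_real y) * g = of_real pi / sin (of_real pi * (\<i> * of_real y))"
    unfolding g_def using Gamma_reflection_complex[of "\<i> * of_real y"] by simp
  have sn: "sin (of_real pi * (\<i> * of_real y)) = \<i> * of_real (sinh (pi * y))"
  proof -
    have "sin (of_real pi * (\<i> * of_real y)) = sin (\<i> * of_real (pi * y))" by (simp add: mult_ac)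
    also have "\<dots> = \<i> * ((exp (of_real (pi * y)) - inverse (exp (of_real (pi * y)))) / 2)" by (rule sin_i_times)
    also have "\<dots> = \<i> * of_real (sinh (pi * y))" by (simp only: exp_of_real) (simp add: sinh_def exp_minus)
    finally show ?thesis .
  qed
  have sh: "sinh (pi * y) > 0" using y by simp
  have "complex_of_real (cmod g ^ 2) = g * cnj g" by (rule complex_norm_square)
  also have "\<dots> = \<i> * of_real y * (Gamma (\<i> * of_real y) * g)" unfolding c by (simp add: mult_ac)
  also have "\<dots> = \<i> * of_real y * (of_real pi / (\<i> * of_real (sinh (pi * y))))" unfolding refl sn ..
  also have "\<dots> = of_real (pi * y / sinh (pi * y))" using sh by (simp add: field_simps)
  finally show ?thesis unfolding g_def by (simp only: of_real_eq_iff)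
qed


lemma arccos_arctan: "x \<ge> 0 \<Longrightarrow> arccos (1 / sqrt (1 + 4 * x^2)) = arctan (2 * x)"
proof -
  assume x: "x \<ge> 0"
  have "cos (arctan (2*x)) = 1 / sqrt (1 + 4 * x^2)" by (simp add: cos_arctan power_mult_distrib)
  moreover have a0: "0 \<le> arctan (2*x)" using x by (simp add: zero_le_arctan_iff)
  moreover have "arctan (2*x) \<le> pi" using a0 arctan_ubound[of "2*x"] pi_gt_zero by linarith
  ultimately show ?thesis using arccos_cos by metis
qed

lemma real_key2:
  defines "s1 \<equiv> (uu - inverse uu) / 2" and "s2 \<equiv> (uu^2 - inverse (uu^2)) / 2" and "c \<equiv> (uu^2 + 1) / (uu + 1)"
  shows "4 * c^2 * s1^4 = uu * s2^2"
proof -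
  have u0: "uu \<noteq> 0" "uu + 1 \<noteq> 0" using uu_gt1 by auto
  have h1: "s1 * (2 * uu) = uu^2 - 1" unfolding s1_def using u0 by (simp add: field_simps power2_eq_square)
  have h2: "s2 * (2 * uu^2) = uu^4 - 1" unfolding s2_def using u0 by (simp add: field_simps)
  have h3: "c * (uu + 1) = uu^2 + 1" unfolding c_def using u0 by simp
  show ?thesis using h1 h2 h3 uu_sq u0 by algebra
qed


lemma w_polar: "(1 - 2 * \<i> * of_real x) ^ 2 / (1 + 2 * \<i> * of_real x) ^ 2 = cis (- 4 * arctan (2 * x))"
proof -
  define q where "q = sqrt (1 + (2*x)^2)"
  have q0: "q > 0" unfolding q_def by (intro real_sqrt_gt_zero add_pos_nonneg) auto
  have a: "1 - 2 * \<i> * of_real x = of_real q * cis (- arctan (2*x))"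
    using one_minus_i_polar[of "2*x"] by (simp add: q_def mult_ac)
  have b: "1 + 2 * \<i> * of_real x = of_real q * cis (arctan (2*x))"
    using one_minus_i_polar[of "-(2*x)"] by (simp add: q_def arctan_minus mult_ac)
  have "(1 - 2 * \<i> * of_real x) ^ 2 / (1 + 2 * \<i> * of_real x) ^ 2 = (cis (- arctan (2*x)) / cis (arctan (2*x))) ^ 2"
    unfolding a b using q0 by (simp add: power_mult_distrib power_divide)
  also have "\<dots> = cis (- 4 * arctan (2 * x))" by (simp add: cis_divide Complex.DeMoivre)
  finally show ?thesis .
qed

definition Sv :: real where "Sv = (\<Sum>n. d_series_term nu0 (Suc n))"

definition Dv :: complex where
  "Dv = of_real (pi / 2 - 8 * nu0 * ln 2 + 2 * arccos (1 / sqrt (1 + 4 * nu0 ^ 2)) + 4 * Sv)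
        + \<i> * of_real (pi / 2 * nu0)"

lemma Bx_exp: "Bx = exp (-2 * \<i> * Dv)"
proof -
  define v where "v = nu0"
  have v0: "v > 0" and vh: "v < 1/2" using nu0_pos nu0_lt by (simp_all add: v_def)
  define g1 where "g1 = Gamma (1 - \<i> * of_real v)"
  define g2 where "g2 = Gamma (1 - 2 * \<i> * of_real v)"
  define Bp where "Bp = g2 ^ 4 / g1 ^ 8"
  define a where "a = arctan (2 * v)"
  define S where "S = Sv"
  have S: "S = (\<Sum>n. d_series_term v (Suc n))" by (simp add: S_def Sv_def v_def)
  define M where "M = cmod Bp"
  have BpP: "Bp = of_real M * cis (-8 * S)"
    unfolding M_def Bp_def g1_def g2_def S by (rule Bp_polar) (use v0 vh in auto)
  define s1 where "s1 = sinh (pi * v)"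
  define s2 where "s2 = sinh (2 * pi * v)"
  have n1: "cmod g1 ^ 2 = pi * v / s1" unfolding g1_def s1_def by (rule Gamma_norm_sq[OF v0])
  have n2: "cmod g2 ^ 2 = 2 * pi * v / s2"
    using Gamma_norm_sq[of "2 * v"] v0 unfolding g2_def s2_def by (simp add: mult_ac)
  have M: "M = (2 * pi * v / s2) ^ 2 / (pi * v / s1) ^ 4"
  proof -
    have "M = (cmod g2 ^ 2) ^ 2 / (cmod g1 ^ 2) ^ 4"
      by (simp add: M_def Bp_def norm_divide norm_power flip: power_mult)
    thus ?thesis unfolding n1 n2 .
  qed
  have s1v: "s1 = (uu - inverse uu) / 2" unfolding s1_def sinh_def v_def
    by (simp add: exp_minus exp_pi_vv)
  have s2v: "s2 = (uu^2 - inverse (uu^2)) / 2" unfolding s2_def v_def by (rule sinh_2pi_nu0)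
  have s1p: "s1 > 0" "s2 > 0" using v0 by (simp_all add: s1_def s2_def)
  define c where "c = (uu^2 + 1) / (uu + 1)"
  have K: "pi ^ 2 * (golden ^ 4 + 1) ^ 2 / (golden ^ 2 + 1) ^ 2 = pi^2 * c^2"
    by (simp add: golden4 golden2 c_def power_divide)
  have KM: "pi^2 * c^2 * v^2 * M = uu"
  proof -
    have "4 * c^2 * s1^4 = uu * s2^2" unfolding s1v s2v c_def by (rule real_key2)
    thus ?thesis unfolding M using v0 s1p pi_gt_zero by (simp add: field_simps power2_eq_square power4_eq_xxxx)
  qed
  have p2: "(2::complex) powr (16 * \<i> * of_real v) = cis (16 * v * ln 2)"
  proof -
    have "ln (2::complex) = of_real (ln 2)" using Ln_of_real[of 2] by simp
    thus ?thesis by (simp add: powr_def cis_conv_exp mult_ac)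
  qed
  have wv: "(1 - 2 * \<i> * of_real v) ^ 2 * of_real (v ^ 2) / (1 + 2 * \<i> * of_real v) ^ 2 = of_real (v^2) * cis (- 4 * a)"
  proof -
    have "(1 - 2 * \<i> * of_real v) ^ 2 * of_real (v ^ 2) / (1 + 2 * \<i> * of_real v) ^ 2
       = of_real (v ^ 2) * ((1 - 2 * \<i> * of_real v) ^ 2 / (1 + 2 * \<i> * of_real v) ^ 2)"
      by (simp add: divide_inverse mult_ac)
    thus ?thesis unfolding w_polar a_def .
  qed
  have "Bx = - of_real (pi^2 * c^2) * cis (16 * v * ln 2) * (of_real (v^2) * cis (- 4 * a)) * (of_real M * cis (-8 * S))"
    unfolding Bx_def Let_def v_def[symmetric] K p2 wv g1_def[symmetric] g2_def[symmetric] Bp_def[symmetric] BpP ..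
  also have "\<dots> = of_real (pi^2 * c^2 * v^2 * M) * (cis (- pi) * cis (16 * v * ln 2) * cis (- 4 * a) * cis (-8 * S))"
  proof -
    have cpi: "cis (- pi) = -1" by (simp add: complex_eq_iff)
    show ?thesis unfolding cpi by (simp add: mult_ac)
  qed
  also have "\<dots> = of_real uu * cis (- pi + 16 * v * ln 2 - 4 * a - 8 * S)"
    unfolding KM by (simp add: cis_mult)
  also have "(of_real uu :: complex) = exp (of_real (pi * v))" by (subst exp_of_real) (simp add: exp_pi_vv v_def)
  also have "exp (of_real (pi * v)) * cis (- pi + 16 * v * ln 2 - 4 * a - 8 * S)
      = exp (of_real (pi * v) + \<i> * of_real (- pi + 16 * v * ln 2 - 4 * a - 8 * S))"
    by (simp add: cis_conv_exp exp_add)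
  also have "of_real (pi * v) + \<i> * of_real (- pi + 16 * v * ln 2 - 4 * a - 8 * S) = -2 * \<i> * Dv"
  proof -
    have ac: "arccos (1 / sqrt (1 + 4 * v ^ 2)) = a" unfolding a_def using v0 by (intro arccos_arctan) simp
    show ?thesis unfolding Dv_def v_def[symmetric] S_def[symmetric] ac
      by (simp add: complex_eq_iff algebra_simps)
  qed
  finally show ?thesis .
qed


lemma half_i_Bx: "half_i_log_values Bx = {Dv + of_int k * of_real pi | k :: int. True}"
proof -
  have nz: "Bx \<noteq> 0" unfolding Bx_exp by simp
  have "exp (Ln Bx) = exp (-2 * \<i> * Dv)" unfolding exp_Ln[OF nz] by (rule Bx_exp)
  then obtain n :: int where n: "Ln Bx = -2 * \<i> * Dv + of_int (2 * n) * pi * \<i>"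
    unfolding exp_eq by blast
  have el: "\<i> / 2 * (Ln Bx + 2 * of_real pi * \<i> * of_int k) = Dv + of_int (- (n + k)) * of_real pi" for k :: int
    unfolding n by (simp add: algebra_simps)
  show ?thesis
  proof (intro equalityI subsetI)
    fix x assume "x \<in> half_i_log_values Bx"
    then obtain k :: int where "x = \<i> / 2 * (Ln Bx + 2 * of_real pi * \<i> * of_int k)"
      unfolding half_i_log_values_def by blast
    thus "x \<in> {Dv + of_int k * of_real pi | k :: int. True}" unfolding el by blast
  next
    fix x assume "x \<in> {Dv + of_int k * of_real pi | k :: int. True}"
    then obtain j :: int where j: "x = Dv + of_int j * of_real pi" by blast
    have "x = \<i> / 2 * (Ln Bx + 2 * of_real pi * \<i> * of_int (- j - n))" unfolding el j by simp
    thus "x \<in> half_i_log_values Bx" unfolding half_i_log_values_def by blast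
  qed
qed

theorem proposition7:
  shows "(PVI_nu (-7) = 2 * ln golden / pi) \<and>
         (PVI_d_values (-1) (-7) (-7) (-7) =
           half_i_log_values
             (let \<nu> = PVI_nu (-7) in
              - of_real (pi ^ 2 * (golden ^ 4 + 1) ^ 2 / (golden ^ 2 + 1) ^ 2)
              * 2 powr (16 * \<i> * of_real \<nu>)
              * ((1 - 2 * \<i> * of_real \<nu>) ^ 2 * of_real (\<nu> ^ 2) / (1 + 2 * \<i> * of_real \<nu>) ^ 2)
              * (Gamma (1 - 2 * \<i> * of_real \<nu>) ^ 4 / Gamma (1 - \<i> * of_real \<nu>) ^ 8))) \<and>
         (\<forall>\<nu>::real. \<bar>\<nu>\<bar> < 1/2 \<longrightarrow> summable (\<lambda>n. \<bar>d_series_term \<nu> (Suc n)\<bar>)) \<and>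
         (PVI_d_values (-1) (-7) (-7) (-7) =
           {(let \<nu> = PVI_nu (-7) in
              of_real (pi / 2 - 8 * \<nu> * ln 2 + 2 * arccos (1 / sqrt (1 + 4 * \<nu> ^ 2))
                       + 4 * (\<Sum>n. d_series_term \<nu> (Suc n)))
              + \<i> * of_real (pi / 2 * \<nu>) + of_int k * of_real pi) | k :: int. True})"
proof (intro conjI)
  show "PVI_nu (-7) = 2 * ln golden / pi" unfolding PVI_nu_7 nu0_def ..
  have dv: "PVI_d_values (-1) (-7) (-7) (-7) = half_i_log_values Bx"
    unfolding PVI_d_values_def PVI_nu_7 part2 ..
  show "PVI_d_values (-1) (-7) (-7) (-7) =
           half_i_log_values
             (let \<nu> = PVI_nu (-7) in
              - of_real (pi ^ 2 * (golden ^ 4 + 1) ^ 2 / (golden ^ 2 + 1) ^ 2)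
              * 2 powr (16 * \<i> * of_real \<nu>)
              * ((1 - 2 * \<i> * of_real \<nu>) ^ 2 * of_real (\<nu> ^ 2) / (1 + 2 * \<i> * of_real \<nu>) ^ 2)
              * (Gamma (1 - 2 * \<i> * of_real \<nu>) ^ 4 / Gamma (1 - \<i> * of_real \<nu>) ^ 8))"
    unfolding dv PVI_nu_7 Bx_def ..
  show "\<forall>\<nu>::real. \<bar>\<nu>\<bar> < 1/2 \<longrightarrow> summable (\<lambda>n. \<bar>d_series_term \<nu> (Suc n)\<bar>)" by (rule part3)
  show "PVI_d_values (-1) (-7) (-7) (-7) =
           {(let \<nu> = PVI_nu (-7) in
              of_real (pi / 2 - 8 * \<nu> * ln 2 + 2 * arccos (1 / sqrt (1 + 4 * \<nu> ^ 2))
                       + 4 * (\<Sum>n. d_series_term \<nu> (Suc n)))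
              + \<i> * of_real (pi / 2 * \<nu>) + of_int k * of_real pi) | k :: int. True}"
    unfolding dv half_i_Bx PVI_nu_7 Let_def Dv_def Sv_def ..
qed


end
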